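(* Let $\alpha,a,b\in\mathbb{C}$ be such that none of $\alpha+a,\alpha-a,\alpha+b,\alpha-b$ belongs to $\{0,-1,-2,\ldots\}$. Then \[ \sum_{k=0}^{\infty}\frac{k+\alpha}{((k+\alpha)^2-a^2)((k+\alpha)^2-b^2)} =\frac12\sum_{n=1}^{\infty}\frac{(-1)^{n-1}(1\pm a\pm b)_{n-1}\bigl(5n^2-6n(1-\alpha)+2(1-\alpha)^2-a^2-b^2\bigr)}{n\binom{2n}{n}(\alpha\pm a)_n(\alpha\pm b)_n}. \]
   Context: $(x)_n=x(x+1)\cdots(x+n-1)$, $(x)_0=1$, is the Pochhammer symbol. The notation $(u\pm v\pm w)_m$ denotes the product of the four factors $(u+v+w)_m(u+v-w)_m(u-v+w)_m(u-v-w)_m$, and $(u\pm v)_m=(u+v)_m(u-v)_m$. *)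

theory Defs
  imports "HOL-Analysis.Analysis"
begin

end

theory Submission
  imports Defs "HOL-Real_Asymp.Real_Asymp"
begin

definition P4 :: "complex \<Rightarrow> complex \<Rightarrow> nat \<Rightarrow> complex" where
 "P4 a b n = pochhammer (1 + a + b) n * pochhammer (1 + a - b) n
                 * pochhammer (1 - a + b) n * pochhammer (1 - a - b) n"
definition DD :: "complex \<Rightarrow> complex \<Rightarrow> complex \<Rightarrow> nat \<Rightarrow> complex" where
 "DD a b x n = (pochhammer (x + a) n * pochhammer (x - a) n) * (pochhammer (x + b) n * pochhammer (x - b) n)"
definition Rg :: "complex \<Rightarrow> complex \<Rightarrow> complex \<Rightarrow> nat \<Rightarrow> complex" where
 "Rg a b x n = (-1) ^ (n - 1) * P4 a b (n - 1)
      * (5 * of_nat n ^ 2 - 6 * of_nat n * (1 - x) + 2 * (1 - x)\<^sup>2 - a\<^sup>2 - b\<^sup>2)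
      / (of_nat n * of_nat (2 * n choose n) * DD a b x n)"
definition FF :: "complex \<Rightarrow> complex \<Rightarrow> complex \<Rightarrow> nat \<Rightarrow> complex" where
 "FF a b x n = (-1) ^ n * (2 * x + of_nat n) * P4 a b n / (2 * of_nat (2 * n choose n) * DD a b x (Suc n))"

definition dd :: "complex \<Rightarrow> complex \<Rightarrow> complex \<Rightarrow> complex" where
 "dd a b y = (y\<^sup>2 - a\<^sup>2) * (y\<^sup>2 - b\<^sup>2)"

lemma binom_rel: "(n+1) * (2*(n+1) choose (n+1)) = 2*(2*n+1)*(2*n choose n)"
proof -
  have 1: "(Suc (Suc (2*n)) choose Suc n) * Suc n = Suc (Suc (2*n)) * (Suc (2*n) choose n)"
    using Suc_times_binomial_eq[of "Suc (2*n)" n] by (simp only: mult.commute)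
  have 2: "(Suc (2*n) choose Suc n) * Suc n = Suc (2*n) * (2*n choose n)"
    using Suc_times_binomial_eq[of "2*n" n] by (simp only: mult.commute)
  have 3: "(Suc (2*n) choose Suc n) = (Suc (2*n) choose n)"
    using binomial_symmetric[of "n" "Suc (2*n)"] by (simp del: binomial_Suc_Suc)
  have "(Suc (Suc (2*n)) choose Suc n) * Suc n = 2 * (Suc (2*n) choose n) * Suc n"
    using 1 by (simp del: binomial_Suc_Suc)
  then have 4: "(Suc (Suc (2*n)) choose Suc n) = 2 * (Suc (2*n) choose n)" using mult_right_cancel[of "Suc n" "Suc (Suc (2*n)) choose Suc n" "2 * (Suc (2*n) choose n)"] by (simp only: nat.distinct simp_thms)
  have "Suc n * (Suc (Suc (2*n)) choose Suc n) = 2 * ((Suc (2*n) choose Suc n) * Suc n)"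
    using 4 3 by (simp del: binomial_Suc_Suc)
  also have "\<dots> = 2 * (Suc (2*n) * (2*n choose n))" using 2 by (simp del: binomial_Suc_Suc)
  finally show ?thesis by (simp del: binomial_Suc_Suc)
qed

lemma DD_Suc: "DD a b x (Suc n) = DD a b x n * dd a b (x + of_nat n)"
  by (simp add: DD_def dd_def pochhammer_Suc power2_eq_square algebra_simps)

lemma DD_rec: "DD a b x (Suc n) = dd a b x * DD a b (x+1) n"
  by (simp add: DD_def dd_def pochhammer_rec power2_eq_square algebra_simps)

lemma P4_Suc: "P4 a b (Suc n) = P4 a b n * (((of_nat n + 1)\<^sup>2 - (a+b)\<^sup>2) * ((of_nat n + 1)\<^sup>2 - (a-b)\<^sup>2))"
  by (simp add: P4_def pochhammer_Suc power2_eq_square algebra_simps)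

lemma poly_id:
  fixes a b x :: complex and n :: nat
  shows "2*(2* of_nat n+1)*(2*x+ of_nat n) * dd a b (x+ of_nat n+1)
     + (((of_nat n + 1)\<^sup>2 - (a+b)\<^sup>2) * ((of_nat n + 1)\<^sup>2 - (a-b)\<^sup>2)) * (of_nat n+1)*(2*x+ of_nat n+1)
   = (5 * (of_nat n+1) ^ 2 - 6 * (of_nat n+1) * (1 - x) + 2 * (1 - x)\<^sup>2 - a\<^sup>2 - b\<^sup>2) * dd a b (x+ of_nat n+1)
   - (5 * (of_nat n+1) ^ 2 - 6 * (of_nat n+1) * (1 - (x+1)) + 2 * (1 - (x+1))\<^sup>2 - a\<^sup>2 - b\<^sup>2) * dd a b x"
  unfolding dd_def by (simp add: algebra_simps power2_eq_square power3_eq_cube)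

lemma WZ_abstract:
  fixes s x m t w P p B C D1 e d0 Qx Qx1 :: complex
  assumes nz: "B \<noteq> 0" "D1 \<noteq> 0" "e \<noteq> 0" "d0 \<noteq> 0" "w \<noteq> 0" "t \<noteq> 0"
    and C: "C = 2*t*B/w"
  shows "s*(2*x+m)*P/(2*B*D1) - (-s)*(2*x+m+1)*(P*p)/(2*C*(D1*e))
     - (s*P*Qx/(w*C*D1)/2 - s*P*Qx1/(w*C*(D1*e/d0))/2)
   = s*P/(4*t*B*D1*e) * ((2*t*(2*x+m)*e + p*w*(2*x+m+1)) - (Qx*e - Qx1*d0))"
  using nz unfolding C by (simp add: field_simps)

lemma WZ:
  assumes nz: "DD a b x (Suc (Suc n)) \<noteq> 0"
  shows "FF a b x n - FF a b x (Suc n) = Rg a b x (Suc n)/2 - Rg a b (x+1) (Suc n)/2"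
proof -
  define m :: complex where "m = of_nat n"
  define D1 where "D1 = DD a b x (Suc n)"
  define e where "e = dd a b (x + m + 1)"
  define d0 where "d0 = dd a b x"
  define P where "P = P4 a b n"
  define p where "p = ((m + 1)\<^sup>2 - (a+b)\<^sup>2) * ((m + 1)\<^sup>2 - (a-b)\<^sup>2)"
  define B :: complex where "B = of_nat (2*n choose n)"
  define C :: complex where "C = of_nat (2*Suc n choose Suc n)"
  define Qx where "Qx = 5 * (m+1) ^ 2 - 6 * (m+1) * (1 - x) + 2 * (1 - x)\<^sup>2 - a\<^sup>2 - b\<^sup>2"
  define Qx1 where "Qx1 = 5 * (m+1) ^ 2 - 6 * (m+1) * (1 - (x+1)) + 2 * (1 - (x+1))\<^sup>2 - a\<^sup>2 - b\<^sup>2"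
  have h1: "DD a b x (Suc (Suc n)) = D1 * e" using DD_Suc[of a b x "Suc n"]
    by (simp add: D1_def e_def m_def add_ac)
  have h2: "DD a b x (Suc (Suc n)) = d0 * DD a b (x+1) (Suc n)" using DD_rec by (simp add: d0_def)
  have D1nz: "D1 \<noteq> 0" and enz: "e \<noteq> 0" using nz h1 by auto
  have d0nz: "d0 \<noteq> 0" using nz h2 by auto
  have h3: "DD a b (x+1) (Suc n) = D1 * e / d0" using h1 h2 d0nz by (simp add: field_simps)
  have Bnz: "B \<noteq> 0" by (simp add: B_def)
  have "(of_nat ((n+1) * (2*(n+1) choose (n+1))) :: complex) = of_nat (2*(2*n+1)*(2*n choose n))"
    using binom_rel[of n] by metis
  then have CC: "(m+1) * C = 2*(2*m+1)*B" by (simp del: binomial_Suc_Suc add: m_def C_def B_def algebra_simps)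
  have t: "2*m+1 \<noteq> 0" unfolding m_def
    by (metis (mono_tags) of_nat_1 of_nat_add of_nat_mult of_nat_numeral add_eq_0_iff_both_eq_0 of_nat_eq_0_iff one_neq_zero)
  have w: "m + 1 \<noteq> 0" unfolding m_def
    by (metis of_nat_Suc of_nat_eq_0_iff Suc_neq_Zero add.commute)
  have Ceq: "C = 2*(2*m+1)*B/(m+1)"
    using CC w by (metis nonzero_mult_div_cancel_left)
  have F0: "FF a b x n = (-1)^n*(2*x+m)*P/(2*B*D1)"
    by (simp add: FF_def m_def P_def B_def D1_def)
  have F1: "FF a b x (Suc n) = (- ((-1)^n))*(2*x+m+1)*(P*p)/(2*C*(D1*e))"
    by (simp del: binomial_Suc_Suc add: FF_def m_def P_def D1_def C_def h1 P4_Suc p_def add_ac)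
  have R0: "Rg a b x (Suc n) = (-1)^n*P*Qx/((m+1)*C*D1)"
    by (simp del: binomial_Suc_Suc add: Rg_def m_def P_def C_def D1_def Qx_def add_ac)
  have R1: "Rg a b (x+1) (Suc n) = (-1)^n*P*Qx1/((m+1)*C*(D1*e/d0))"
    by (simp del: binomial_Suc_Suc add: Rg_def m_def P_def C_def h3[symmetric] Qx1_def add_ac)
  have pid: "2*(2*m+1)*(2*x+m)*e + p*(m+1)*(2*x+m+1) = Qx*e - Qx1*d0"
    using poly_id[of n x a b] by (simp add: m_def e_def d0_def p_def Qx_def Qx1_def add.assoc)
  have "FF a b x n - FF a b x (Suc n) - (Rg a b x (Suc n)/2 - Rg a b (x+1) (Suc n)/2)
     = (-1)^n*P/(4*(2*m+1)*B*D1*e) * ((2*(2*m+1)*(2*x+m)*e + p*(m+1)*(2*x+m+1)) - (Qx*e - Qx1*d0))"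
    unfolding F0 F1 R0 R1 by (rule WZ_abstract[OF Bnz D1nz enz d0nz w t Ceq])
  also have "\<dots> = 0" using pid by simp
  finally show ?thesis by simp
qed


lemma pochhammer_norm_ge1:
  fixes z :: complex
  assumes "1 \<le> Re z"
  shows "1 \<le> norm (pochhammer z n)"
proof (induction n)
  case 0 then show ?case by simp
next
  case (Suc n)
  have "1 \<le> Re (z + of_nat n)" using assms by simp
  also have "\<dots> \<le> norm (z + of_nat n)" by (rule complex_Re_le_cmod)
  finally have "1 \<le> norm (z + of_nat n)" .
  then have "1 * 1 \<le> norm (pochhammer z n) * norm (z + of_nat n)"
    using Suc by (intro mult_mono) auto
  then show ?case by (simp add: pochhammer_Suc norm_mult)
qed

lemma sq_lower:
  fixes y c :: complex and u t :: real
  assumes "u \<le> norm y" "norm c + t \<le> u" "0 \<le> t"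
  shows "t^2 \<le> norm (y^2 - c^2)"
proof -
  have "norm (y^2) - norm (c^2) \<le> norm (y^2 - c^2)" by (rule norm_triangle_ineq2)
  moreover have "norm (y^2) = (norm y)^2" "norm (c^2) = (norm c)^2" by (simp_all add: norm_power)
  moreover have "t^2 \<le> u^2 - (norm c)^2"
  proof -
    have "0 \<le> norm c" by simp
    have u0: "0 \<le> u - norm c" using assms by linarith
    have "t^2 \<le> (u - norm c)^2" using assms by (intro power_mono) auto
    moreover have "norm c * norm c \<le> u * norm c"
      using assms by (intro mult_right_mono) auto
    then have "(u - norm c)^2 \<le> u^2 - (norm c)^2"
      by (simp add: power2_eq_square algebra_simps)
    ultimately show ?thesis by linarith
  qed
  moreover have "u^2 \<le> (norm y)^2"
  proof -
    have "0 \<le> u" using assms norm_ge_zero[of c] by linarith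
    then show ?thesis using assms by (intro power_mono) auto
  qed
  ultimately show ?thesis by linarith
qed

lemma dd_lower:
  fixes \<alpha> a b :: complex
  defines "r \<equiv> norm \<alpha> + norm a + norm b + 1"
  assumes j: "r \<le> real j"
  shows "(real j - r)^4 \<le> norm (dd a b (of_nat j + \<alpha>))"
proof -
  have u: "real j - norm \<alpha> \<le> norm (of_nat j + \<alpha>)"
    using norm_diff_ineq[of "of_nat j" \<alpha>] by simp
  have t: "0 \<le> real j - r" using j by simp
  have A: "(real j - r)^2 \<le> norm ((of_nat j + \<alpha>)^2 - a^2)"
    by (rule sq_lower[OF u _ t]) (unfold r_def, insert norm_ge_zero[of a] norm_ge_zero[of b], linarith)
  have B: "(real j - r)^2 \<le> norm ((of_nat j + \<alpha>)^2 - b^2)"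
    by (rule sq_lower[OF u _ t]) (unfold r_def, insert norm_ge_zero[of a] norm_ge_zero[of b], linarith)
  have "(real j - r)^4 = (real j - r)^2 * (real j - r)^2" by algebra
  also have "\<dots> \<le> norm ((of_nat j + \<alpha>)^2 - a^2) * norm ((of_nat j + \<alpha>)^2 - b^2)"
    using A B by (intro mult_mono) auto
  finally show ?thesis by (simp add: dd_def norm_mult)
qed


definition rr :: "complex \<Rightarrow> complex \<Rightarrow> complex \<Rightarrow> real" where
  "rr \<alpha> a b = norm \<alpha> + norm a + norm b + 1"

lemma rr_ge:
  fixes \<alpha> a b :: complex
  shows "norm \<alpha> + norm a + norm b + 1 \<le> rr \<alpha> a b" "1 \<le> rr \<alpha> a b" "0 \<le> rr \<alpha> a b"
  "norm \<alpha> \<le> rr \<alpha> a b" "norm a \<le> rr \<alpha> a b" "norm b \<le> rr \<alpha> a b"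
  using norm_ge_zero[of \<alpha>] norm_ge_zero[of a] norm_ge_zero[of b] by (auto simp: rr_def)

lemma Re_lower: "Re z \<ge> - norm z" for z :: complex
  using abs_Re_le_cmod[of z] by linarith

lemma DD_lower:
  assumes k: "rr \<alpha> a b \<le> real k"
  shows "(real k - rr \<alpha> a b)^4 \<le> norm (DD a b (of_nat k + \<alpha>) (Suc n))"
proof -
  define x where "x = of_nat k + \<alpha>"
  have d: "(real k - rr \<alpha> a b)^4 \<le> norm (dd a b x)"
    using dd_lower[of \<alpha> a b k] k by (simp add: rr_def x_def)
  have ge1: "1 \<le> norm (pochhammer (x + 1 + c) n)" if c: "norm c \<le> norm a + norm b" for c
  proof (rule pochhammer_norm_ge1)
    have "Re (x + 1 + c) = real k + Re \<alpha> + 1 + Re c" by (simp add: x_def)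
    moreover have "Re \<alpha> \<ge> - norm \<alpha>" "Re c \<ge> - norm c" by (rule Re_lower)+
    moreover have "norm \<alpha> + norm a + norm b \<le> real k" using k rr_ge(1)[where \<alpha>=\<alpha> and a=a and b=b] by linarith
    ultimately show "1 \<le> Re (x + 1 + c)" using c by linarith
  qed
  have "1 \<le> norm (DD a b (x+1) n)"
  proof -
    have e1: "1 \<le> norm (pochhammer (x + 1 + a) n)" by (rule ge1) simp
    have e2: "1 \<le> norm (pochhammer (x + 1 + - a) n)" by (rule ge1) simp
    have e3: "1 \<le> norm (pochhammer (x + 1 + b) n)" by (rule ge1) simp
    have e4: "1 \<le> norm (pochhammer (x + 1 + - b) n)" by (rule ge1) simp
    have "1 * 1 * (1 * 1) \<le> (norm (pochhammer (x + 1 + a) n) * norm (pochhammer (x + 1 + - a) n))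
        * (norm (pochhammer (x + 1 + b) n) * norm (pochhammer (x + 1 + - b) n))"
      using e1 e2 e3 e4 by (intro mult_mono) auto
    then show ?thesis by (simp add: DD_def norm_mult)
  qed
  then have "(real k - rr \<alpha> a b)^4 * 1 \<le> norm (dd a b x) * norm (DD a b (x+1) n)"
    using d by (intro mult_mono) auto
  then show ?thesis by (simp add: DD_rec norm_mult x_def)
qed

lemma poch_nz:
  assumes "z \<notin> \<int>\<^sub>\<le>\<^sub>0"
  shows "pochhammer (of_nat k + z) n \<noteq> (0::complex)"
proof
  assume "pochhammer (of_nat k + z) n = 0"
  then obtain j where "of_nat k + z = - of_nat j" by (auto simp: pochhammer_eq_0_iff)
  then have "z = - of_nat (k + j)" by (simp add: algebra_simps)
  then show False using assms minus_of_nat_in_nonpos_Ints[of "k+j", where ?'a=complex] by auto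
qed

lemma DD_nz:
  assumes "\<alpha> + a \<notin> \<int>\<^sub>\<le>\<^sub>0" "\<alpha> - a \<notin> \<int>\<^sub>\<le>\<^sub>0" "\<alpha> + b \<notin> \<int>\<^sub>\<le>\<^sub>0" "\<alpha> - b \<notin> \<int>\<^sub>\<le>\<^sub>0"
  shows "DD a b (of_nat k + \<alpha>) n \<noteq> 0"
  using poch_nz[OF assms(1), of k n] poch_nz[OF assms(2), of k n] poch_nz[OF assms(3), of k n]
    poch_nz[OF assms(4), of k n]
  by (simp add: DD_def add.assoc add_diff_eq)


lemma ratio_abstract:
  fixes s x m t w P p B C D1 e :: complex
  assumes nz: "B \<noteq> 0" "D1 \<noteq> 0" "e \<noteq> 0" "w \<noteq> 0" "t \<noteq> 0"
    and C: "C = 2*t*B/w"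
  shows "(- s)*(2*x+m+1)*(P*p)/(2*C*(D1*e)) * ((2*x + m) * (2*t) * e)
      = - (s*(2*x+m)*P/(2*B*D1)) * ((2*x + m + 1) * p * w)"
  using nz unfolding C by (simp add: field_simps)

lemma FF_ratio:
  assumes nz: "DD a b x (Suc (Suc n)) \<noteq> 0"
  shows "FF a b x (Suc n) * ((2*x + of_nat n) * (2*(2* of_nat n+1)) * dd a b (x + of_nat n + 1))
       = - FF a b x n * ((2*x + of_nat n + 1) * (((of_nat n + 1)\<^sup>2 - (a+b)\<^sup>2) * ((of_nat n + 1)\<^sup>2 - (a-b)\<^sup>2)) * (of_nat n + 1))"
proof -
  define m :: complex where "m = of_nat n"
  define D1 where "D1 = DD a b x (Suc n)"
  define e where "e = dd a b (x + m + 1)"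
  define P where "P = P4 a b n"
  define p where "p = ((m + 1)\<^sup>2 - (a+b)\<^sup>2) * ((m + 1)\<^sup>2 - (a-b)\<^sup>2)"
  define B :: complex where "B = of_nat (2*n choose n)"
  define C :: complex where "C = of_nat (2*Suc n choose Suc n)"
  have h1: "DD a b x (Suc (Suc n)) = D1 * e" using DD_Suc[of a b x "Suc n"]
    by (simp add: D1_def e_def m_def add_ac)
  have D1nz: "D1 \<noteq> 0" and enz: "e \<noteq> 0" using nz h1 by auto
  have Bnz: "B \<noteq> 0" by (simp add: B_def)
  have "(of_nat ((n+1) * (2*(n+1) choose (n+1))) :: complex) = of_nat (2*(2*n+1)*(2*n choose n))"
    using binom_rel[of n] by metis
  then have CC: "(m+1) * C = 2*(2*m+1)*B" by (simp del: binomial_Suc_Suc add: m_def C_def B_def algebra_simps)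
  have w: "m + 1 \<noteq> 0" unfolding m_def
    by (metis of_nat_Suc of_nat_eq_0_iff Suc_neq_Zero add.commute)
  have Ceq: "C = 2*(2*m+1)*B/(m+1)"
    using CC w by (metis nonzero_mult_div_cancel_left)
  have t: "2*m+1 \<noteq> 0" unfolding m_def
    by (metis (mono_tags) of_nat_1 of_nat_add of_nat_mult of_nat_numeral add_eq_0_iff_both_eq_0 of_nat_eq_0_iff one_neq_zero)
  have F0: "FF a b x n = (-1)^n*(2*x+m)*P/(2*B*D1)"
    by (simp add: FF_def m_def P_def B_def D1_def)
  have F1: "FF a b x (Suc n) = (- ((-1)^n))*(2*x+m+1)*(P*p)/(2*C*(D1*e))"
    by (simp del: binomial_Suc_Suc add: FF_def m_def P_def D1_def C_def h1 P4_Suc p_def add_ac)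
  have "FF a b x (Suc n) * ((2*x + m) * (2*(2*m+1)) * e) = - FF a b x n * ((2*x + m + 1) * p * (m + 1))"
    unfolding F0 F1 by (rule ratio_abstract[OF Bnz D1nz enz w t Ceq])
  then show ?thesis by (simp add: m_def e_def p_def)
qed

lemma FF_bound:
  assumes k: "rr \<alpha> a b < real k"
  shows "norm (FF a b (of_nat k + \<alpha>) n) \<le> norm (P4 a b n) / (2 * real (2*n choose n))
           * ((2*(real k + rr \<alpha> a b) + real n) / (real k - rr \<alpha> a b)^4)"
proof -
  define x where "x = of_nat k + \<alpha>"
  have e: "norm (FF a b x n) = norm (P4 a b n) / (2 * real (2*n choose n))
             * (norm (2*x + of_nat n) / norm (DD a b x (Suc n)))"
    by (simp add: FF_def norm_mult norm_divide norm_power)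
  have nx: "norm x \<le> real k + norm \<alpha>" unfolding x_def using norm_triangle_ineq[of "of_nat k" \<alpha>] by simp
  have "norm (2*x + of_nat n) \<le> norm (2*x) + norm (of_nat n :: complex)" by (rule norm_triangle_ineq)
  also have "\<dots> = 2 * norm x + real n" by (simp add: norm_mult)
  also have "\<dots> \<le> 2*(real k + rr \<alpha> a b) + real n" using nx rr_ge(4)[where \<alpha>=\<alpha> and a=a and b=b] by (smt (verit))
  finally have n1: "norm (2*x + of_nat n) \<le> 2*(real k + rr \<alpha> a b) + real n" .
  have pos: "0 < (real k - rr \<alpha> a b)^4" using k by simp
  have d: "(real k - rr \<alpha> a b)^4 \<le> norm (DD a b x (Suc n))" unfolding x_def
    by (rule DD_lower) (use k in linarith)
  have "norm (2*x + of_nat n) / norm (DD a b x (Suc n)) \<le> (2*(real k + rr \<alpha> a b) + real n) / (real k - rr \<alpha> a b)^4"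
    by (rule frac_le) (use n1 pos d rr_ge(3)[where \<alpha>=\<alpha> and a=a and b=b] in auto)
  then show ?thesis unfolding e[unfolded x_def] x_def by (intro mult_left_mono) auto
qed

lemma summable_FF: "summable (\<lambda>k. norm (FF a b (of_nat k + \<alpha>) n))"
proof -
  define c where "c = norm (P4 a b n) / (2 * real (2*n choose n))"
  define r where "r = rr \<alpha> a b"
  define g where "g = (\<lambda>k::nat. c * ((2*(real k + r) + real n) / (real k - r)^4))"
  have "g \<in> O(\<lambda>k. 1/real k^2)" unfolding g_def by real_asymp
  moreover have "summable (\<lambda>k::nat. norm (1/real k^2))"
    using inverse_power_summable[of 2, where 'a=real] by (simp add: divide_inverse)
  ultimately have sg: "summable g" by (rule summable_comparison_test_bigo[rotated])
  show ?thesis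
  proof (rule summable_comparison_test'[OF sg])
    fix k assume "nat (ceiling r) + 1 \<le> k"
    then have "r < real k" by linarith
    then show "norm (norm (FF a b (of_nat k + \<alpha>) n)) \<le> g k"
      using FF_bound[of \<alpha> a b k n] by (simp add: g_def c_def r_def)
  qed
qed


lemma Q_norm:
  fixes m y a b :: complex
  shows "norm (5*m^2 - 6*m*y + 2*y^2 - a^2 - b^2)
          \<le> 5*norm m^2 + 6*norm m * norm y + 2*norm y^2 + norm a^2 + norm b^2"
proof -
  have "norm (5*m^2 - 6*m*y + 2*y^2 - a^2 - b^2) \<le> norm (5*m^2 - 6*m*y + 2*y^2 - a^2) + norm (b^2)"
    by (rule norm_triangle_ineq4)
  also have "norm (5*m^2 - 6*m*y + 2*y^2 - a^2) \<le> norm (5*m^2 - 6*m*y + 2*y^2) + norm (a^2)"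
    by (rule norm_triangle_ineq4)
  also have "norm (5*m^2 - 6*m*y + 2*y^2) \<le> norm (5*m^2 - 6*m*y) + norm (2*y^2)"
    by (rule norm_triangle_ineq)
  also have "norm (5*m^2 - 6*m*y) \<le> norm (5*m^2) + norm (6*m*y)"
    by (rule norm_triangle_ineq4)
  finally show ?thesis by (simp add: norm_mult norm_power)
qed

lemma Rg_lim: "(\<lambda>k. Rg a b (of_nat k + \<alpha>) (Suc n)) \<longlonglongrightarrow> 0"
proof (rule Lim_null_comparison)
  define r where "r = rr \<alpha> a b"
  define c where "c = norm (P4 a b n) / (real (Suc n) * real (2 * Suc n choose Suc n))"
  define q where "q = (\<lambda>k::nat. 5*real (Suc n)^2 + 6*real (Suc n)*(1 + real k + r) + 2*(1 + real k + r)^2 + r^2 + r^2)"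
  show "(\<lambda>k. c * (q k / (real k - r)^4)) \<longlonglongrightarrow> 0" unfolding q_def by real_asymp
  have "eventually (\<lambda>k. r < real k) sequentially" by real_asymp
  then show "eventually (\<lambda>k. norm (Rg a b (of_nat k + \<alpha>) (Suc n)) \<le> c * (q k / (real k - r)^4)) sequentially"
  proof eventually_elim
    case (elim k)
    define x where "x = of_nat k + \<alpha>"
    define Q where "Q = 5 * of_nat (Suc n) ^ 2 - 6 * of_nat (Suc n) * (1 - x) + 2 * (1 - x)\<^sup>2 - a\<^sup>2 - b\<^sup>2"
    have e: "norm (Rg a b x (Suc n)) = c * (norm Q / norm (DD a b x (Suc n)))"
      by (simp del: binomial_Suc_Suc of_nat_Suc add: Rg_def Q_def c_def norm_mult norm_divide norm_power norm_of_nat)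
    have ny: "norm (1 - x) \<le> 1 + real k + r"
    proof -
      have "norm (1 - x) \<le> norm (1::complex) + norm x" by (rule norm_triangle_ineq4)
      moreover have "norm x \<le> real k + norm \<alpha>" unfolding x_def using norm_triangle_ineq[of "of_nat k" \<alpha>] by simp
      ultimately show ?thesis using rr_ge(4)[where \<alpha>=\<alpha> and a=a and b=b] unfolding r_def by (smt (verit) norm_one)
    qed
    have nQ: "norm Q \<le> q k"
    proof -
      have "norm Q \<le> 5*norm (of_nat (Suc n) :: complex)^2 + 6*norm (of_nat (Suc n) :: complex) * norm (1-x)
            + 2*norm (1-x)^2 + norm a^2 + norm b^2"
        unfolding Q_def by (rule Q_norm)
      also have "\<dots> \<le> q k"
      proof -
        have y0: "0 \<le> norm (1 - x)" by simp
        have "norm (1-x)^2 \<le> (1 + real k + r)^2" using ny y0 by (intro power_mono) auto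
        moreover have "norm a^2 \<le> r^2" "norm b^2 \<le> r^2" unfolding r_def using rr_ge(5,6)[where \<alpha>=\<alpha> and a=a and b=b]
          by (auto intro: power_mono)
        moreover have h6: "6*real (Suc n) * norm (1-x) \<le> 6*real (Suc n) * (1 + real k + r)"
          using ny by (intro mult_left_mono) auto
        ultimately show ?thesis unfolding q_def by (simp del: of_nat_Suc) (use h6 in linarith)
      qed
      finally show ?thesis .
    qed
    have pos: "0 < (real k - r)^4" using elim by simp
    have d: "(real k - r)^4 \<le> norm (DD a b x (Suc n))" unfolding x_def r_def
      by (rule DD_lower) (use elim r_def in linarith)
    have "norm Q / norm (DD a b x (Suc n)) \<le> q k / (real k - r)^4"
      by (rule frac_le) (use nQ pos d norm_ge_zero[of Q] in \<open>auto intro: order.trans[OF norm_ge_zero nQ]\<close>)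
    then show ?case unfolding e[unfolded x_def] x_def c_def by (intro mult_left_mono) auto
  qed
qed


definition beta :: "real \<Rightarrow> nat \<Rightarrow> real" where
  "beta r N = (1 + 1/(real N - 2*r)) * (((real N+1)^2+r^2)^2*(real N+1)/(2*(2*real N+1)*(real N+1-r)^4))"

lemma beta_lim: "beta r \<longlonglongrightarrow> 1/4"
  unfolding beta_def by real_asymp

lemma p_norm:
  fixes a b :: complex and M r :: real
  assumes "norm a + norm b \<le> r"
  shows "norm ((of_real M)\<^sup>2 - (a+b)\<^sup>2) \<le> M^2 + r^2"
proof -
  have "norm ((of_real M)\<^sup>2 - (a+b)\<^sup>2) \<le> norm ((of_real M :: complex)\<^sup>2) + norm ((a+b)\<^sup>2)"
    by (rule norm_triangle_ineq4)
  also have "\<dots> = M^2 + norm (a+b)^2" by (simp add: norm_power)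
  also have "norm (a+b)^2 \<le> r^2"
  proof -
    have "norm (a+b) \<le> r" using norm_triangle_ineq[of a b] assms by linarith
    then show ?thesis by (intro power_mono) auto
  qed
  finally show ?thesis by simp
qed

lemma real_abs:
  fixes F1 F0 A T E B P M :: real
  assumes "F1 * (A*T*E) = F0*(B*P*M)" "A \<noteq> 0" "T \<noteq> 0" "E \<noteq> 0"
  shows "F1 = F0 * (B/A) * (P*M/(T*E))"
  using assms by (simp add: field_simps)

lemma FF_step:
  assumes nz: "DD a b (of_nat k + \<alpha>) (Suc (Suc N)) \<noteq> 0" and N: "2 * rr \<alpha> a b + 1 < real N"
  shows "norm (FF a b (of_nat k + \<alpha>) (Suc N)) \<le> beta (rr \<alpha> a b) N * norm (FF a b (of_nat k + \<alpha>) N)"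
proof -
  define x where "x = of_nat k + \<alpha>"
  define r where "r = rr \<alpha> a b"
  define e where "e = dd a b (x + of_nat N + 1)"
  define p where "p = (((of_nat N + 1)\<^sup>2 - (a+b)\<^sup>2) * ((of_nat N + 1)\<^sup>2 - (a-b)\<^sup>2) :: complex)"
  define F0 where "F0 = norm (FF a b x N)"
  define F1 where "F1 = norm (FF a b x (Suc N))"
  define A where "A = norm (2*x + of_nat N)"
  define B where "B = norm (2*x + of_nat N + 1)"
  have r0: "0 \<le> r" "norm \<alpha> \<le> r" "norm a + norm b + 1 \<le> r"
    using rr_ge[where \<alpha>=\<alpha> and a=a and b=b] norm_ge_zero[of \<alpha>] unfolding r_def by linarith+
  have eq: "F1 * (A * (2*(2*real N+1)) * norm e) = F0 * (B * norm p * (real N + 1))"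
  proof -
    have "norm (FF a b x (Suc N) * ((2*x + of_nat N) * (2*(2* of_nat N+1)) * e))
        = norm (- FF a b x N * ((2*x + of_nat N + 1) * p * (of_nat N + 1)))"
      using arg_cong[OF FF_ratio[OF nz[folded x_def]], of norm] unfolding e_def p_def .
    moreover have "norm (2*(2* of_nat N+1) :: complex) = 2*(2*real N+1)"
    proof -
      have "(2*(2* of_nat N+1) :: complex) = of_nat (2*(2*N+1))" by simp
      then show ?thesis by (simp only: norm_of_nat) simp
    qed
    moreover have "norm (of_nat N + 1 :: complex) = real N + 1"
    proof -
      have "(of_nat N + 1 :: complex) = of_nat (N+1)" by simp
      then show ?thesis by (simp only: norm_of_nat)
    qed
    ultimately show ?thesis by (simp add: F0_def F1_def A_def B_def norm_mult)
  qed
  have A1: "real N - 2*r \<le> A"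
  proof -
    have "Re (2*x + of_nat N) = 2 * real k + 2 * Re \<alpha> + real N" by (simp add: x_def)
    moreover have "Re \<alpha> \<ge> - norm \<alpha>" by (rule Re_lower)
    moreover have "Re (2*x + of_nat N) \<le> A" unfolding A_def by (rule complex_Re_le_cmod)
    ultimately show ?thesis using r0 by linarith
  qed
  have Apos: "0 < real N - 2*r" using N r_def by simp
  have B1: "B \<le> A + 1" unfolding A_def B_def using norm_triangle_ineq[of "2*x + of_nat N" 1] by simp
  have E1: "(real N + 1 - r)^4 \<le> norm e"
  proof -
    have jj: "x + of_nat N + 1 = of_nat (k + N + 1) + \<alpha>" by (simp add: x_def)
    have "r \<le> real (k+N+1)" using Apos r0 by simp
    then have "(real (k+N+1) - r)^4 \<le> norm e" unfolding e_def jj r_def rr_def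
      by (rule dd_lower)
    moreover have "(real N + 1 - r)^4 \<le> (real (k+N+1) - r)^4"
      using Apos r0 by (intro power_mono) auto
    ultimately show ?thesis by linarith
  qed
  have Epos: "0 < (real N + 1 - r)^4" using Apos r0 by simp
  have P1: "norm p \<le> ((real N+1)^2+r^2)^2"
  proof -
    have c: "(of_nat N + 1 :: complex) = of_real (real N + 1)" by simp
    have "norm ((of_real (real N + 1))\<^sup>2 - (a+b)\<^sup>2) \<le> (real N+1)^2 + r^2"
      by (rule p_norm) (use r0 in linarith)
    moreover have "norm ((of_real (real N + 1))\<^sup>2 - (a+ -b)\<^sup>2) \<le> (real N+1)^2 + r^2"
      by (rule p_norm) (use r0 in auto)
    ultimately have "norm ((of_real (real N + 1))\<^sup>2 - (a+b)\<^sup>2) * norm ((of_real (real N + 1))\<^sup>2 - (a+ -b)\<^sup>2)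
        \<le> ((real N+1)^2 + r^2) * ((real N+1)^2 + r^2)"
      by (intro mult_mono) auto
    then show ?thesis unfolding p_def c by (simp add: norm_mult power2_eq_square)
  qed
  have Apos': "0 < A" using A1 Apos by linarith
  have T: "0 < 2*(2*real N+1)" by simp
  have Enz: "0 < norm e" using E1 Epos by linarith
  have F1eq: "F1 = F0 * (B / A) * (norm p * (real N + 1) / (2*(2*real N+1) * norm e))"
    by (rule real_abs[OF eq]) (use Apos' Enz T in auto)
  have BA: "B / A \<le> 1 + 1/(real N - 2*r)"
  proof -
    have "B / A \<le> (A + 1) / A" using B1 Apos' by (intro divide_right_mono) auto
    also have "\<dots> = 1 + 1/A" using Apos' by (simp add: field_simps)
    also have "1/A \<le> 1/(real N - 2*r)" using A1 Apos by (intro divide_left_mono) auto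
    finally show ?thesis by simp
  qed
  have PE: "norm p * (real N + 1) / (2*(2*real N+1) * norm e)
        \<le> ((real N+1)^2+r^2)^2*(real N+1)/(2*(2*real N+1)*(real N+1-r)^4)"
  proof (rule frac_le)
    show "norm p * (real N + 1) \<le> ((real N+1)^2+r^2)^2*(real N+1)"
      using P1 by (intro mult_right_mono) auto
    show "0 < 2*(2*real N+1)*(real N+1-r)^4" using T Epos by simp
    show "2*(2*real N+1)*(real N+1-r)^4 \<le> 2*(2*real N+1) * norm e"
      using E1 T by (intro mult_left_mono) auto
  qed simp
  have "F1 \<le> F0 * ((1 + 1/(real N - 2*r)) * (((real N+1)^2+r^2)^2*(real N+1)/(2*(2*real N+1)*(real N+1-r)^4)))"
  proof -
    have "B / A * (norm p * (real N + 1) / (2*(2*real N+1) * norm e))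
        \<le> (1 + 1/(real N - 2*r)) * (((real N+1)^2+r^2)^2*(real N+1)/(2*(2*real N+1)*(real N+1-r)^4))"
      using BA PE Apos' Apos Enz T by (intro mult_mono) (auto simp: B_def)
    then show ?thesis unfolding F1eq mult.assoc F0_def by (intro mult_left_mono) auto
  qed
  then show ?thesis by (simp add: F1_def F0_def beta_def r_def x_def mult.commute)
qed

theorem theorem3:
  fixes \<alpha> a b :: complex
  assumes "\<alpha> + a \<notin> \<int>\<^sub>\<le>\<^sub>0" "\<alpha> - a \<notin> \<int>\<^sub>\<le>\<^sub>0"
      and "\<alpha> + b \<notin> \<int>\<^sub>\<le>\<^sub>0" "\<alpha> - b \<notin> \<int>\<^sub>\<le>\<^sub>0"
  defines "L \<equiv> (\<lambda>k::nat. (of_nat k + \<alpha>) /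
              (((of_nat k + \<alpha>)\<^sup>2 - a\<^sup>2) * ((of_nat k + \<alpha>)\<^sup>2 - b\<^sup>2)))"
      and "R \<equiv> (\<lambda>n::nat. (-1) ^ (n - 1)
              * (pochhammer (1 + a + b) (n - 1) * pochhammer (1 + a - b) (n - 1)
                 * pochhammer (1 - a + b) (n - 1) * pochhammer (1 - a - b) (n - 1))
              * (5 * of_nat n ^ 2 - 6 * of_nat n * (1 - \<alpha>) + 2 * (1 - \<alpha>)\<^sup>2 - a\<^sup>2 - b\<^sup>2)
              / (of_nat n * of_nat (2 * n choose n)
                 * (pochhammer (\<alpha> + a) n * pochhammer (\<alpha> - a) n)
                 * (pochhammer (\<alpha> + b) n * pochhammer (\<alpha> - b) n)))"
  shows "summable L \<and> summable (\<lambda>n. R (Suc n)) \<and>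
         (\<Sum>k. L k) = 1/2 * (\<Sum>n. R (Suc n))"
proof -
  define F where "F = (\<lambda>n k. FF a b (of_nat k + \<alpha>) n)"
  define G where "G = (\<lambda>n k. Rg a b (of_nat k + \<alpha>) (Suc n) / 2)"
  define r where "r = rr \<alpha> a b"
  have nzD: "\<And>k n. DD a b (of_nat k + \<alpha>) n \<noteq> 0" using DD_nz[OF assms(1-4)] .
  have W: "F n k - F (Suc n) k = G n k - G n (Suc k)" for n k
  proof -
    have e: "of_nat k + \<alpha> + 1 = of_nat (Suc k) + \<alpha>" by simp
    show ?thesis using WZ[OF nzD[of k "Suc (Suc n)"], unfolded e] by (simp add: F_def G_def)
  qed
  have L0: "F 0 k = L k" for k
  proof -
    define x where "x = of_nat k + \<alpha>"
    have d: "DD a b x (Suc 0) = (x^2 - a^2) * (x^2 - b^2)"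
      by (simp add: DD_def power2_eq_square algebra_simps)
    have "FF a b x 0 = (2*x) / (2 * DD a b x (Suc 0))" by (simp add: FF_def P4_def)
    then show ?thesis unfolding F_def L_def x_def[symmetric] d by simp
  qed
  have absS: "summable (\<lambda>k. norm (F n k))" for n unfolding F_def by (rule summable_FF)
  have S: "summable (F n)" for n using absS[of n] by (rule summable_norm_cancel)
  have Glim: "(\<lambda>k. G n k) \<longlonglongrightarrow> 0" for n
    unfolding G_def using tendsto_divide_zero[OF Rg_lim, of a b \<alpha> n 2] .
  define T where "T = (\<lambda>n. \<Sum>k. F n k)"
  have step: "T n - T (Suc n) = G n 0" for n
  proof -
    have "(\<lambda>k. F n k - F (Suc n) k) sums (T n - T (Suc n))"
      unfolding T_def by (intro sums_diff summable_sums S)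
    moreover have "(\<lambda>k. F n k - F (Suc n) k) sums (G n 0 - 0)"
      unfolding W by (rule telescope_sums'[OF Glim])
    ultimately show ?thesis using sums_unique2 by force
  qed
  have partial: "(\<Sum>n<N. G n 0) = T 0 - T N" for N
  proof (induction N)
    case 0 then show ?case by simp
  next
    case (Suc N) then show ?case using step[of N] by (simp add: algebra_simps)
  qed
  have Tlim: "T \<longlonglongrightarrow> 0"
  proof -
    have "eventually (\<lambda>N. beta r N < 1/2) sequentially"
      using order_tendstoD(2)[OF beta_lim[of r], of "1/2"] by simp
    moreover have "eventually (\<lambda>N. 2 * r + 1 < real N) sequentially" by real_asymp
    ultimately have "eventually (\<lambda>N. beta r N < 1/2 \<and> 2 * r + 1 < real N) sequentially"
      by (rule eventually_conj)
    then obtain N0 where N0: "\<And>N. N \<ge> N0 \<Longrightarrow> beta r N < 1/2 \<and> 2 * r + 1 < real N"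
      unfolding eventually_sequentially by blast
    have st: "norm (F (Suc N) k) \<le> 1/2 * norm (F N k)" if "N \<ge> N0" for N k
    proof -
      have "norm (F (Suc N) k) \<le> beta r N * norm (F N k)"
        unfolding F_def r_def by (rule FF_step[OF nzD]) (use N0[OF that] r_def in simp)
      also have "\<dots> \<le> 1/2 * norm (F N k)"
        using N0[OF that] by (intro mult_right_mono) auto
      finally show ?thesis .
    qed
    have geo: "norm (F (N0 + j) k) \<le> (1/2)^j * norm (F N0 k)" for j k
    proof (induction j)
      case 0 then show ?case by simp
    next
      case (Suc j)
      have "norm (F (N0 + Suc j) k) \<le> 1/2 * norm (F (N0 + j) k)"
        using st[of "N0 + j" k] by simp
      also have "\<dots> \<le> 1/2 * ((1/2)^j * norm (F N0 k))" using Suc by simp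
      finally show ?case by simp
    qed
    define C where "C = (\<Sum>k. norm (F N0 k))"
    have bnd: "norm (T (j + N0)) \<le> (1/2)^j * C" for j
    proof -
      have "norm (T (j + N0)) \<le> (\<Sum>k. norm (F (N0 + j) k))"
        unfolding T_def using summable_norm[OF absS[of "N0 + j"]] by (simp add: add.commute)
      also have "\<dots> \<le> (\<Sum>k. (1/2)^j * norm (F N0 k))"
        by (rule suminf_le) (use geo absS summable_mult[OF absS[of N0]] in auto)
      also have "\<dots> = (1/2)^j * C" unfolding C_def by (rule suminf_mult[OF absS])
      finally show ?thesis .
    qed
    have "(\<lambda>j. (1/2::real)^j * C) \<longlonglongrightarrow> 0"
      by (rule tendsto_mult_left_zero) (rule LIMSEQ_power_zero, simp)
    then have "(\<lambda>j. T (j + N0)) \<longlonglongrightarrow> 0"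
      by (rule Lim_null_comparison[rotated]) (use bnd in auto)
    then show ?thesis by (rule LIMSEQ_offset)
  qed
  have GS: "(\<lambda>n. G n 0) sums T 0"
  proof -
    have "(\<lambda>N. T 0 - T N) \<longlonglongrightarrow> T 0 - 0" by (intro tendsto_diff tendsto_const Tlim)
    then show ?thesis unfolding sums_def partial by simp
  qed
  have GR: "G n 0 = R (Suc n) / 2" for n
    by (simp del: binomial_Suc_Suc of_nat_Suc add: G_def R_def Rg_def P4_def DD_def)
  have RS: "(\<lambda>n. R (Suc n)) sums (2 * T 0)"
    using sums_mult[OF GS, of 2] unfolding GR by simp
  have LS: "L sums T 0"
    using summable_sums[OF S[of 0]] unfolding T_def L0 by simp
  show ?thesis
    using RS LS by (auto simp: sums_iff)
qed

end
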